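(* Let $f=[f_k]:\mathbb{R}^n\to\mathbb{R}^n$ and $g_p=[g_{p,k}]:\mathbb{R}^n\to\mathbb{R}^n$, $p\in\{1,\dots,d\}$, be functions, let $\alpha^1,\dots,\alpha^d\in\mathbb{N}^m$, and let $(x^i,\dot x^i,u^i)\in\mathbb{R}^n\times\mathbb{R}^n\times\mathbb{R}^m$ be a data point satisfying $\dot x^i=f(x^i)+\sum_{p=1}^d g_p(x^i)\,u^i[\alpha^p]$. Let $\mathcal{F}^i=[\mathcal{F}^i_k]\in\mathbb{IR}^n$ with $f(x^i)\in\mathcal{F}^i$ and $\mathcal{G}^i=[\mathcal{G}^i_{p,k}]\in\mathbb{IR}^{d\times n}$ with $g_{p,k}(x^i)\in\mathcal{G}^i_{p,k}$ for all $p,k$. For each $k\in\{1,\dots,n\}$ define, using interval arithmetic, $$C_{\mathcal{F}^i_k}=\mathcal{F}^i_k\cap\Big(\dot x^i_k-\sum_{p=1}^d\mathcal{G}^i_{p,k}\,u^i[\alpha^p]\Big),\qquad \mathcal{S}_{0,k}=\big(\dot x^i_k-C_{\mathcal{F}^i_k}\big)\cap\Big(\sum_{p=1}^d\mathcal{G}^i_{p,k}\,u^i[\alpha^p]\Big),$$ and recursively for $p=1,\dots,d$: $$C_{\mathcal{G}^i_{p,k}}=\begin{cases}\Big(\big(\mathcal{S}_{p-1,k}-\sum_{l=p+1}^d\mathcal{G}^i_{l,k}u^i[\alpha^l]\big)\cap\mathcal{G}^i_{p,k}u^i[\alpha^p]\Big)\dfrac{1}{u^i[\alpha^p]}, & \text{if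 } u^i[\alpha^p]\neq0,\\[1ex] \mathcal{G}^i_{p,k}, &\text{otherwise,}\end{cases}$$ $$\mathcal{S}_{p,k}=\big(\mathcal{S}_{p-1,k}-C_{\mathcal{G}^i_{p,k}}u^i[\alpha^p]\big)\cap\Big(\sum_{l=p+1}^d\mathcal{G}^i_{l,k}u^i[\alpha^l]\Big)$$ (an empty sum being $[0,0]$). Then $C_{\mathcal{F}^i}=[C_{\mathcal{F}^i_k}]$ and $C_{\mathcal{G}^i}=[C_{\mathcal{G}^i_{p,k}}]$ are the smallest intervals enclosing $f(x^i)$ and $g_p(x^i)$ given only the data $(x^i,\dot x^i,u^i)$, $\mathcal{F}^i$ and $\mathcal{G}^i$; that is, for every $k$ and $p$, $C_{\mathcal{F}^i_k}$ (resp. $C_{\mathcal{G}^i_{p,k}}$) is exactly the set of values of the $k$-th component of $F$ (resp. the $(p,k)$ entry of $G$) over all pairs $(F,G)\in\mathcal{F}^i\times\mathcal{G}^i$ satisfying $\dot x^i=F+\sum_{p=1}^d G_{p,\cdot}\,u^i[\alpha^p]$, where $G_{p,\cdot}\in\mathbb{R}^n$ is the $p$-th row of $G$.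
   Context: $\mathbb{IR}$ is the set of closed bounded real intervals; $\mathbb{IR}^n$, $\mathbb{IR}^{d\times n}$ are interval vectors/matrices, with intersection and membership componentwise. Operations between intervals and reals are standard interval arithmetic ($\mathcal{A}+\mathcal{B}=\{a+b\}$, $c\mathcal{A}=\{ca\}$, $\mathcal{A}-\mathcal{B}=\{a-b\}$ for $a\in\mathcal{A},b\in\mathcal{B}$), real numbers being identified with degenerate intervals. For $u\in\mathbb{R}^m$ and $\alpha\in\mathbb{N}^m$, $u[\alpha]=u_1^{\alpha_1}\cdots u_m^{\alpha_m}$. *)

theory Defs
  imports "HOL-Analysis.Analysis"
begin

text \<open>Closed bounded real intervals are represented as sets of reals; interval
  arithmetic is the set-wise (Minkowski) arithmetic, reals being identified with
  degenerate intervals (singletons).\<close>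

definition is_cinterval :: "real set \<Rightarrow> bool" where
  "is_cinterval A \<longleftrightarrow> (\<exists>a b. a \<le> b \<and> A = {a..b})"

definition iadd :: "real set \<Rightarrow> real set \<Rightarrow> real set" where
  "iadd A B = {a + b | a b. a \<in> A \<and> b \<in> B}"

definition isub :: "real set \<Rightarrow> real set \<Rightarrow> real set" where
  "isub A B = {a - b | a b. a \<in> A \<and> b \<in> B}"

definition iscale :: "real \<Rightarrow> real set \<Rightarrow> real set" where
  "iscale c A = {c * a | a. a \<in> A}"

fun isum_list :: "real set list \<Rightarrow> real set" where
  "isum_list [] = {0}"
| "isum_list (A # As) = iadd A (isum_list As)"

definition monom :: "real ^ 'm \<Rightarrow> ('m \<Rightarrow> nat) \<Rightarrow> real" where
  "monom u \<alpha> = (\<Prod>j\<in>UNIV. (u $ j) ^ (\<alpha> j))"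

definition gsum :: "(nat \<Rightarrow> 'n \<Rightarrow> real set) \<Rightarrow> real ^ 'm \<Rightarrow> (nat \<Rightarrow> 'm \<Rightarrow> nat)
    \<Rightarrow> nat \<Rightarrow> 'n \<Rightarrow> nat \<Rightarrow> real set" where
  "gsum GG u \<alpha> d k p = isum_list (map (\<lambda>l. iscale (monom u (\<alpha> l)) (GG l k)) [Suc p..<Suc d])"

definition CF :: "('n \<Rightarrow> real set) \<Rightarrow> (nat \<Rightarrow> 'n \<Rightarrow> real set) \<Rightarrow> real ^ 'n \<Rightarrow> real ^ 'm
    \<Rightarrow> (nat \<Rightarrow> 'm \<Rightarrow> nat) \<Rightarrow> nat \<Rightarrow> 'n \<Rightarrow> real set" where
  "CF FF GG xd u \<alpha> d k = FF k \<inter> isub {xd $ k} (gsum GG u \<alpha> d k 0)"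

definition CGstep :: "real set \<Rightarrow> (nat \<Rightarrow> 'n \<Rightarrow> real set) \<Rightarrow> real ^ 'm
    \<Rightarrow> (nat \<Rightarrow> 'm \<Rightarrow> nat) \<Rightarrow> nat \<Rightarrow> nat \<Rightarrow> 'n \<Rightarrow> real set" where
  "CGstep Sprev GG u \<alpha> d p k =
     (if monom u (\<alpha> p) \<noteq> 0
      then iscale (1 / monom u (\<alpha> p))
             (isub Sprev (gsum GG u \<alpha> d k p) \<inter> iscale (monom u (\<alpha> p)) (GG p k))
      else GG p k)"

fun S :: "('n \<Rightarrow> real set) \<Rightarrow> (nat \<Rightarrow> 'n \<Rightarrow> real set) \<Rightarrow> real ^ 'n \<Rightarrow> real ^ 'm
    \<Rightarrow> (nat \<Rightarrow> 'm \<Rightarrow> nat) \<Rightarrow> nat \<Rightarrow> nat \<Rightarrow> 'n \<Rightarrow> real set" where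
  "S FF GG xd u \<alpha> d 0 k =
     isub {xd $ k} (CF FF GG xd u \<alpha> d k) \<inter> gsum GG u \<alpha> d k 0"
| "S FF GG xd u \<alpha> d (Suc p) k =
     isub (S FF GG xd u \<alpha> d p k)
          (iscale (monom u (\<alpha> (Suc p))) (CGstep (S FF GG xd u \<alpha> d p k) GG u \<alpha> d (Suc p) k))
     \<inter> gsum GG u \<alpha> d k (Suc p)"

definition CG :: "('n \<Rightarrow> real set) \<Rightarrow> (nat \<Rightarrow> 'n \<Rightarrow> real set) \<Rightarrow> real ^ 'n \<Rightarrow> real ^ 'm
    \<Rightarrow> (nat \<Rightarrow> 'm \<Rightarrow> nat) \<Rightarrow> nat \<Rightarrow> nat \<Rightarrow> 'n \<Rightarrow> real set" where
  "CG FF GG xd u \<alpha> d p k = CGstep (S FF GG xd u \<alpha> d (p - 1) k) GG u \<alpha> d p k"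

end

theory Submission
  imports Defs
begin

lemma isum_map:
  "distinct xs \<Longrightarrow> isum_list (map (\<lambda>l. iscale (c l) (A l)) xs)
     = {\<Sum>l\<in>set xs. c l * h l | h. \<forall>l\<in>set xs. h l \<in> A l}"
proof (induction xs)
  case Nil
  then show ?case by auto
next
  case (Cons a xs)
  have "x \<in> {\<Sum>l\<in>set (a#xs). c l * h l | h. \<forall>l\<in>set (a#xs). h l \<in> A l}"
    if "x \<in> iadd (iscale (c a) (A a)) {\<Sum>l\<in>set xs. c l * h l | h. \<forall>l\<in>set xs. h l \<in> A l}" for x
  proof -
    from that obtain y h where y: "y \<in> A a" and h: "\<forall>l\<in>set xs. h l \<in> A l"
      and x: "x = c a * y + (\<Sum>l\<in>set xs. c l * h l)"
      unfolding iadd_def iscale_def by blast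
    let ?h = "h(a := y)"
    have "(\<Sum>l\<in>set xs. c l * ?h l) = (\<Sum>l\<in>set xs. c l * h l)"
      using Cons.prems by (intro sum.cong) auto
    then have "x = (\<Sum>l\<in>set (a#xs). c l * ?h l)" using x Cons.prems by simp
    moreover have "\<forall>l\<in>set (a#xs). ?h l \<in> A l" using y h by auto
    ultimately show ?thesis by blast
  qed
  moreover have "x \<in> iadd (iscale (c a) (A a)) {\<Sum>l\<in>set xs. c l * h l | h. \<forall>l\<in>set xs. h l \<in> A l}"
    if "x \<in> {\<Sum>l\<in>set (a#xs). c l * h l | h. \<forall>l\<in>set (a#xs). h l \<in> A l}" for x
  proof -
    from that obtain h where h: "\<forall>l\<in>set (a#xs). h l \<in> A l" and x: "x = (\<Sum>l\<in>set (a#xs). c l * h l)"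
      by blast
    then have "x = c a * h a + (\<Sum>l\<in>set xs. c l * h l)" using Cons.prems by simp
    then show ?thesis unfolding iadd_def iscale_def using h by auto
  qed
  ultimately have "iadd (iscale (c a) (A a)) {\<Sum>l\<in>set xs. c l * h l | h. \<forall>l\<in>set xs. h l \<in> A l}
     = {\<Sum>l\<in>set (a#xs). c l * h l | h. \<forall>l\<in>set (a#xs). h l \<in> A l}" by blast
  moreover have "distinct xs" using Cons.prems by simp
  ultimately show ?case using Cons.IH by simp
qed

lemma gsum_eq: "gsum GG u \<alpha> d k p =
   {\<Sum>l\<in>{Suc p..d}. monom u (\<alpha> l) * h l | h. \<forall>l\<in>{Suc p..d}. h l \<in> GG l k}"
proof -
  have "set [Suc p..<Suc d] = {Suc p..d}" by auto
  then show ?thesis unfolding gsum_def by (subst isum_map) simp_all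
qed

lemma sum_split_1d:
  fixes f :: "nat \<Rightarrow> real"
  assumes "q \<le> d"
  shows "(\<Sum>l\<in>{1..d}. f l) = (\<Sum>l\<in>{1..q}. f l) + (\<Sum>l\<in>{Suc q..d}. f l)"
proof -
  have "{1..d} = {1..q} \<union> {Suc q..d}" using assms by auto
  then show ?thesis by (simp add: sum.union_disjoint)
qed

context
  fixes FF :: "('n::finite) \<Rightarrow> real set" and GG :: "nat \<Rightarrow> 'n \<Rightarrow> real set"
    and xd :: "real ^ 'n" and u :: "real ^ ('m::finite)" and \<alpha> :: "nat \<Rightarrow> 'm \<Rightarrow> nat"
    and d :: nat and k :: 'n
begin

definition Fe :: "real \<Rightarrow> (nat \<Rightarrow> real) \<Rightarrow> bool" where
  "Fe F0 h \<longleftrightarrow> F0 \<in> FF k \<and> (\<forall>l\<in>{1..d}. h l \<in> GG l k)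
     \<and> xd $ k = F0 + (\<Sum>l\<in>{1..d}. monom u (\<alpha> l) * h l)"

lemma CF_eq: "CF FF GG xd u \<alpha> d k = {F0 | F0 h. Fe F0 h}"
proof (intro set_eqI iffI)
  fix z assume "z \<in> CF FF GG xd u \<alpha> d k"
  then obtain h where "z \<in> FF k" "\<forall>l\<in>{1..d}. h l \<in> GG l k"
    "z = xd $ k - (\<Sum>l\<in>{1..d}. monom u (\<alpha> l) * h l)"
    unfolding CF_def gsum_eq isub_def by auto
  then have "Fe z h" unfolding Fe_def by auto
  then show "z \<in> {F0 | F0 h. Fe F0 h}" by blast
next
  fix z assume "z \<in> {F0 | F0 h. Fe F0 h}"
  then obtain h where "Fe z h" by blast
  then show "z \<in> CF FF GG xd u \<alpha> d k"
    unfolding CF_def gsum_eq isub_def Fe_def by force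
qed

lemma S0_eq: "S FF GG xd u \<alpha> d 0 k = {\<Sum>l\<in>{Suc 0..d}. monom u (\<alpha> l) * h l | F0 h. Fe F0 h}"
proof (intro set_eqI iffI)
  fix z assume "z \<in> S FF GG xd u \<alpha> d 0 k"
  then obtain F0 h where "Fe F0 h" "z = xd $ k - F0"
    unfolding S.simps CF_eq isub_def by auto
  then have "Fe F0 h \<and> z = (\<Sum>l\<in>{Suc 0..d}. monom u (\<alpha> l) * h l)"
    unfolding Fe_def by auto
  then show "z \<in> {\<Sum>l\<in>{Suc 0..d}. monom u (\<alpha> l) * h l | F0 h. Fe F0 h}" by blast
next
  fix z assume "z \<in> {\<Sum>l\<in>{Suc 0..d}. monom u (\<alpha> l) * h l | F0 h. Fe F0 h}"
  then obtain F0 h where Fe: "Fe F0 h" and z: "z = (\<Sum>l\<in>{Suc 0..d}. monom u (\<alpha> l) * h l)" by blast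
  have "z \<in> isub {xd $ k} (CF FF GG xd u \<alpha> d k)"
    unfolding CF_eq isub_def using Fe z unfolding Fe_def by force
  moreover have "z \<in> gsum GG u \<alpha> d k 0"
    unfolding gsum_eq using Fe z unfolding Fe_def by auto
  ultimately show "z \<in> S FF GG xd u \<alpha> d 0 k" by simp
qed


lemma CG_step:
  assumes qd: "q < d"
    and Sq: "S FF GG xd u \<alpha> d q k = {\<Sum>l\<in>{Suc q..d}. monom u (\<alpha> l) * h l | F0 h. Fe F0 h}"
    and ex: "Fe F1 h1"
  shows "CGstep (S FF GG xd u \<alpha> d q k) GG u \<alpha> d (Suc q) k = {h (Suc q) | F0 h. Fe F0 h}"
proof (cases "monom u (\<alpha> (Suc q)) = 0")
  case True
  have "CGstep (S FF GG xd u \<alpha> d q k) GG u \<alpha> d (Suc q) k = GG (Suc q) k"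
    unfolding CGstep_def using True by simp
  also have "\<dots> = {h (Suc q) | F0 h. Fe F0 h}"
  proof (intro set_eqI iffI)
    fix y assume y: "y \<in> GG (Suc q) k"
    let ?h = "h1(Suc q := y)"
    have "(\<Sum>l\<in>{1..d}. monom u (\<alpha> l) * ?h l) = (\<Sum>l\<in>{1..d}. monom u (\<alpha> l) * h1 l)"
      using True by (intro sum.cong) auto
    then have "Fe F1 ?h" using ex y unfolding Fe_def by auto
    moreover have "y = ?h (Suc q)" by simp
    ultimately show "y \<in> {h (Suc q) | F0 h. Fe F0 h}" by blast
  next
    fix y assume "y \<in> {h (Suc q) | F0 h. Fe F0 h}"
    then show "y \<in> GG (Suc q) k" using qd unfolding Fe_def by auto
  qed
  finally show ?thesis .
next
  case False
  define c where "c = monom u (\<alpha> (Suc q))"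
  have c0: "c \<noteq> 0" using False c_def by simp
  have CGe: "CGstep (S FF GG xd u \<alpha> d q k) GG u \<alpha> d (Suc q) k =
     iscale (1 / c) (isub (S FF GG xd u \<alpha> d q k) (gsum GG u \<alpha> d k (Suc q)) \<inter> iscale c (GG (Suc q) k))"
    unfolding CGstep_def c_def using False by simp
  show ?thesis
  proof (intro set_eqI iffI)
    fix z assume "z \<in> CGstep (S FF GG xd u \<alpha> d q k) GG u \<alpha> d (Suc q) k"
    then obtain w where zw: "z = 1 / c * w" and w1: "w \<in> isub (S FF GG xd u \<alpha> d q k) (gsum GG u \<alpha> d k (Suc q))"
      and w2: "w \<in> iscale c (GG (Suc q) k)"
      unfolding CGe iscale_def by blast
    from w2 obtain g where g: "g \<in> GG (Suc q) k" and wg: "w = c * g" unfolding iscale_def by blast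
    from w1 obtain s t where wst: "w = s - t" and s: "s \<in> S FF GG xd u \<alpha> d q k"
      and t: "t \<in> gsum GG u \<alpha> d k (Suc q)" unfolding isub_def by blast
    from s obtain F0 h where Fe: "Fe F0 h" and sh: "s = (\<Sum>l\<in>{Suc q..d}. monom u (\<alpha> l) * h l)"
      unfolding Sq by blast
    from t obtain h2 where h2: "\<forall>l\<in>{Suc (Suc q)..d}. h2 l \<in> GG l k"
      and th: "t = (\<Sum>l\<in>{Suc (Suc q)..d}. monom u (\<alpha> l) * h2 l)"
      unfolding gsum_eq by blast
    define h' where "h' l = (if l \<le> q then h l else if l = Suc q then g else h2 l)" for l
    have zg: "z = g" using zw wg c0 by simp
    have A: "(\<Sum>l\<in>{1..q}. monom u (\<alpha> l) * h' l) = (\<Sum>l\<in>{1..q}. monom u (\<alpha> l) * h l)"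
      by (intro sum.cong) (auto simp: h'_def)
    have B: "(\<Sum>l\<in>{Suc (Suc q)..d}. monom u (\<alpha> l) * h' l) = t"
      unfolding th by (intro sum.cong) (auto simp: h'_def)
    have "(\<Sum>l\<in>{Suc q..d}. monom u (\<alpha> l) * h' l) = c * g + t"
      using qd B by (simp add: sum.atLeast_Suc_atMost c_def h'_def)
    also have "\<dots> = s" using wst wg by simp
    finally have C: "(\<Sum>l\<in>{Suc q..d}. monom u (\<alpha> l) * h' l) = s" .
    have "(\<Sum>l\<in>{1..d}. monom u (\<alpha> l) * h' l) = (\<Sum>l\<in>{1..d}. monom u (\<alpha> l) * h l)"
      using qd A C sh sum_split_1d[of q d] by simp
    moreover have "\<forall>l\<in>{1..d}. h' l \<in> GG l k"
      using Fe h2 g unfolding Fe_def h'_def by auto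
    ultimately have "Fe F0 h'" using Fe unfolding Fe_def by simp
    moreover have "z = h' (Suc q)" using zg by (simp add: h'_def)
    ultimately show "z \<in> {h (Suc q) | F0 h. Fe F0 h}" by blast
  next
    fix z assume "z \<in> {h (Suc q) | F0 h. Fe F0 h}"
    then obtain F0 h where Fe: "Fe F0 h" and z: "z = h (Suc q)" by blast
    define s where "s = (\<Sum>l\<in>{Suc q..d}. monom u (\<alpha> l) * h l)"
    define t where "t = (\<Sum>l\<in>{Suc (Suc q)..d}. monom u (\<alpha> l) * h l)"
    have s: "s \<in> S FF GG xd u \<alpha> d q k" unfolding Sq s_def using Fe by blast
    have t: "t \<in> gsum GG u \<alpha> d k (Suc q)" unfolding gsum_eq t_def using Fe unfolding Fe_def by auto
    have st: "s - t = c * h (Suc q)" using qd unfolding s_def t_def c_def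
      by (simp add: sum.atLeast_Suc_atMost)
    have "c * h (Suc q) \<in> isub (S FF GG xd u \<alpha> d q k) (gsum GG u \<alpha> d k (Suc q))"
      unfolding isub_def using s t st by force
    moreover have "c * h (Suc q) \<in> iscale c (GG (Suc q) k)"
      unfolding iscale_def using Fe qd unfolding Fe_def by auto
    moreover have "z = 1 / c * (c * h (Suc q))" using z c0 by simp
    ultimately show "z \<in> CGstep (S FF GG xd u \<alpha> d q k) GG u \<alpha> d (Suc q) k"
      unfolding CGe iscale_def by blast
  qed
qed

lemma S_step:
  assumes qd: "q < d"
    and Sq: "S FF GG xd u \<alpha> d q k = {\<Sum>l\<in>{Suc q..d}. monom u (\<alpha> l) * h l | F0 h. Fe F0 h}"
    and ex: "Fe F1 h1"
  shows "S FF GG xd u \<alpha> d (Suc q) k = {\<Sum>l\<in>{Suc (Suc q)..d}. monom u (\<alpha> l) * h l | F0 h. Fe F0 h}"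
proof -
  define c where "c = monom u (\<alpha> (Suc q))"
  have Se: "S FF GG xd u \<alpha> d (Suc q) k = isub (S FF GG xd u \<alpha> d q k) (iscale c {h (Suc q) | F0 h. Fe F0 h})
       \<inter> gsum GG u \<alpha> d k (Suc q)"
    using CG_step[OF qd Sq ex] by (simp add: c_def)
  show ?thesis
  proof (intro set_eqI iffI)
    fix t assume "t \<in> S FF GG xd u \<alpha> d (Suc q) k"
    then obtain s g F1' h1' where s: "s \<in> S FF GG xd u \<alpha> d q k" and tsg: "t = s - c * g"
      and Fe1: "Fe F1' h1'" and g: "g = h1' (Suc q)" and t: "t \<in> gsum GG u \<alpha> d k (Suc q)"
      unfolding Se isub_def iscale_def by blast
    from s obtain F0 h where Fe: "Fe F0 h" and sh: "s = (\<Sum>l\<in>{Suc q..d}. monom u (\<alpha> l) * h l)"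
      unfolding Sq by blast
    from t obtain h2 where h2: "\<forall>l\<in>{Suc (Suc q)..d}. h2 l \<in> GG l k"
      and th: "t = (\<Sum>l\<in>{Suc (Suc q)..d}. monom u (\<alpha> l) * h2 l)"
      unfolding gsum_eq by blast
    have gG: "g \<in> GG (Suc q) k" using Fe1 g qd unfolding Fe_def by auto
    define h' where "h' l = (if l \<le> q then h l else if l = Suc q then g else h2 l)" for l
    have A: "(\<Sum>l\<in>{1..q}. monom u (\<alpha> l) * h' l) = (\<Sum>l\<in>{1..q}. monom u (\<alpha> l) * h l)"
      by (intro sum.cong) (auto simp: h'_def)
    have B: "(\<Sum>l\<in>{Suc (Suc q)..d}. monom u (\<alpha> l) * h' l) = t"
      unfolding th by (intro sum.cong) (auto simp: h'_def)
    have "(\<Sum>l\<in>{Suc q..d}. monom u (\<alpha> l) * h' l) = c * g + t"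
      using qd B by (simp add: sum.atLeast_Suc_atMost c_def h'_def)
    also have "\<dots> = s" using tsg by simp
    finally have C: "(\<Sum>l\<in>{Suc q..d}. monom u (\<alpha> l) * h' l) = s" .
    have "(\<Sum>l\<in>{1..d}. monom u (\<alpha> l) * h' l) = (\<Sum>l\<in>{1..d}. monom u (\<alpha> l) * h l)"
      using qd A C sh sum_split_1d[of q d] by simp
    moreover have "\<forall>l\<in>{1..d}. h' l \<in> GG l k"
      using Fe h2 gG unfolding Fe_def h'_def by auto
    ultimately have "Fe F0 h'" using Fe unfolding Fe_def by simp
    with B show "t \<in> {\<Sum>l\<in>{Suc (Suc q)..d}. monom u (\<alpha> l) * h l | F0 h. Fe F0 h}" by force
  next
    fix t assume "t \<in> {\<Sum>l\<in>{Suc (Suc q)..d}. monom u (\<alpha> l) * h l | F0 h. Fe F0 h}"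
    then obtain F0 h where Fe: "Fe F0 h" and t: "t = (\<Sum>l\<in>{Suc (Suc q)..d}. monom u (\<alpha> l) * h l)" by blast
    define s where "s = (\<Sum>l\<in>{Suc q..d}. monom u (\<alpha> l) * h l)"
    have s: "s \<in> S FF GG xd u \<alpha> d q k" unfolding Sq s_def using Fe by blast
    have st: "t = s - c * h (Suc q)" using qd unfolding s_def t c_def
      by (simp add: sum.atLeast_Suc_atMost)
    have "c * h (Suc q) \<in> iscale c {h (Suc q) | F0 h. Fe F0 h}"
      unfolding iscale_def using Fe by blast
    then have "t \<in> isub (S FF GG xd u \<alpha> d q k) (iscale c {h (Suc q) | F0 h. Fe F0 h})"
      unfolding isub_def using s st by blast
    moreover have "t \<in> gsum GG u \<alpha> d k (Suc q)" unfolding gsum_eq t using Fe unfolding Fe_def by auto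
    ultimately show "t \<in> S FF GG xd u \<alpha> d (Suc q) k" unfolding Se by blast
  qed
qed

lemma S_all:
  assumes ex: "Fe F1 h1"
  shows "q \<le> d \<Longrightarrow> S FF GG xd u \<alpha> d q k = {\<Sum>l\<in>{Suc q..d}. monom u (\<alpha> l) * h l | F0 h. Fe F0 h}"
proof (induction q)
  case 0
  then show ?case using S0_eq by simp
next
  case (Suc q)
  then show ?case using S_step[OF _ _ ex] by simp
qed

lemma CG_all:
  assumes ex: "Fe F1 h1" and p: "p \<in> {1..d}"
  shows "CG FF GG xd u \<alpha> d p k = {h p | F0 h. Fe F0 h}"
proof -
  obtain q where pq: "p = Suc q" using p by (cases p) auto
  then have "q < d" using p by simp
  then show ?thesis unfolding CG_def pq using CG_step[OF _ S_all[OF ex] ex] by simp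
qed

end


lemma vec_eq_sum:
  fixes xd F :: "real ^ ('n::finite)" and G :: "nat \<Rightarrow> real ^ 'n"
  shows "(xd = F + (\<Sum>p\<in>A. c p *\<^sub>R G p)) \<longleftrightarrow> (\<forall>k. xd $ k = F $ k + (\<Sum>p\<in>A. c p * G p $ k))"
  by (simp add: vec_eq_iff)

theorem lemma2:
  fixes f :: "real ^ ('n::finite) \<Rightarrow> real ^ 'n"
    and g :: "nat \<Rightarrow> real ^ ('n::finite) \<Rightarrow> real ^ 'n"
    and alpha :: "nat \<Rightarrow> ('m::finite) \<Rightarrow> nat"
    and x xd :: "real ^ 'n"
    and u :: "real ^ 'm"
    and d :: nat
    and FF :: "'n \<Rightarrow> real set"
    and GG :: "nat \<Rightarrow> 'n \<Rightarrow> real set"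
  assumes data: "xd = f x + (\<Sum>p\<in>{1..d}. monom u (alpha p) *\<^sub>R g p x)"
    and FF_int: "\<forall>k. is_cinterval (FF k)"
    and f_in: "\<forall>k. f x $ k \<in> FF k"
    and GG_int: "\<forall>p\<in>{1..d}. \<forall>k. is_cinterval (GG p k)"
    and g_in: "\<forall>p\<in>{1..d}. \<forall>k. g p x $ k \<in> GG p k"
  shows "(\<forall>k. CF FF GG xd u alpha d k =
            {F $ k | F G. (\<forall>k'. F $ k' \<in> FF k') \<and> (\<forall>p\<in>{1..d}. \<forall>k'. G p $ k' \<in> GG p k')
                          \<and> xd = F + (\<Sum>p\<in>{1..d}. monom u (alpha p) *\<^sub>R G p)})
       \<and> (\<forall>p\<in>{1..d}. \<forall>k. CG FF GG xd u alpha d p k =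
            {G p $ k | F G. (\<forall>k'. F $ k' \<in> FF k') \<and> (\<forall>q\<in>{1..d}. \<forall>k'. G q $ k' \<in> GG q k')
                          \<and> xd = F + (\<Sum>q\<in>{1..d}. monom u (alpha q) *\<^sub>R G q)})"
proof -
  let ?c = "\<lambda>l. monom u (alpha l)"
  have dataC: "\<forall>k. xd $ k = f x $ k + (\<Sum>p\<in>{1..d}. ?c p * g p x $ k)"
    using data vec_eq_sum[where xd=xd and F="f x" and c="?c" and A="{1..d}" and G="\<lambda>p. g p x"] by blast
  have ex: "Fe FF GG xd u alpha d k (f x $ k) (\<lambda>l. g l x $ k)" for k
    using dataC f_in g_in unfolding Fe_def by auto
  have fwd: "Fe FF GG xd u alpha d k (F $ k) (\<lambda>l. G l $ k)"
    if "\<forall>k'. F $ k' \<in> FF k'" "\<forall>p\<in>{1..d}. \<forall>k'. G p $ k' \<in> GG p k'"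
       "xd = F + (\<Sum>p\<in>{1..d}. ?c p *\<^sub>R G p)" for k F G
    using that vec_eq_sum[where xd=xd and F=F and c="?c" and A="{1..d}" and G=G] unfolding Fe_def by auto
  have bwd: "\<exists>F G. (\<forall>k'. F $ k' \<in> FF k') \<and> (\<forall>p\<in>{1..d}. \<forall>k'. G p $ k' \<in> GG p k')
       \<and> xd = F + (\<Sum>p\<in>{1..d}. ?c p *\<^sub>R G p) \<and> F $ k = F0 \<and> (\<forall>l. G l $ k = h l)"
    if Fe: "Fe FF GG xd u alpha d k F0 h" for k F0 h
  proof -
    define F :: "real ^ 'n" where "F = (\<chi> k'. if k' = k then F0 else f x $ k')"
    define G :: "nat \<Rightarrow> real ^ 'n" where "G = (\<lambda>l. \<chi> k'. if k' = k then h l else g l x $ k')"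
    have "\<forall>k'. xd $ k' = F $ k' + (\<Sum>p\<in>{1..d}. ?c p * G p $ k')"
    proof
      fix k'
      show "xd $ k' = F $ k' + (\<Sum>p\<in>{1..d}. ?c p * G p $ k')"
        using Fe dataC unfolding Fe_def F_def G_def by (cases "k' = k") auto
    qed
    then have "xd = F + (\<Sum>p\<in>{1..d}. ?c p *\<^sub>R G p)" using vec_eq_sum[where xd=xd and F=F and c="?c" and A="{1..d}" and G=G] by blast
    moreover have "\<forall>k'. F $ k' \<in> FF k'" using Fe f_in unfolding Fe_def F_def by auto
    moreover have "\<forall>p\<in>{1..d}. \<forall>k'. G p $ k' \<in> GG p k'" using Fe g_in unfolding Fe_def G_def by auto
    moreover have "F $ k = F0 \<and> (\<forall>l. G l $ k = h l)" unfolding F_def G_def by simp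
    ultimately show ?thesis by blast
  qed
  show ?thesis
  proof (intro conjI allI ballI)
    fix k
    show "CF FF GG xd u alpha d k =
            {F $ k | F G. (\<forall>k'. F $ k' \<in> FF k') \<and> (\<forall>p\<in>{1..d}. \<forall>k'. G p $ k' \<in> GG p k')
                          \<and> xd = F + (\<Sum>p\<in>{1..d}. monom u (alpha p) *\<^sub>R G p)}"
      unfolding CF_eq
    proof (intro set_eqI iffI)
      fix z assume "z \<in> {F0 | F0 h. Fe FF GG xd u alpha d k F0 h}"
      then obtain h where "Fe FF GG xd u alpha d k z h" by blast
      from bwd[OF this] show "z \<in> {F $ k | F G. (\<forall>k'. F $ k' \<in> FF k') \<and> (\<forall>p\<in>{1..d}. \<forall>k'. G p $ k' \<in> GG p k')
                          \<and> xd = F + (\<Sum>p\<in>{1..d}. monom u (alpha p) *\<^sub>R G p)}" by blast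
    next
      fix z assume "z \<in> {F $ k | F G. (\<forall>k'. F $ k' \<in> FF k') \<and> (\<forall>p\<in>{1..d}. \<forall>k'. G p $ k' \<in> GG p k')
                          \<and> xd = F + (\<Sum>p\<in>{1..d}. monom u (alpha p) *\<^sub>R G p)}"
      then show "z \<in> {F0 | F0 h. Fe FF GG xd u alpha d k F0 h}" using fwd by blast
    qed
  next
    fix p k assume p: "p \<in> {1..d}"
    show "CG FF GG xd u alpha d p k =
            {G p $ k | F G. (\<forall>k'. F $ k' \<in> FF k') \<and> (\<forall>q\<in>{1..d}. \<forall>k'. G q $ k' \<in> GG q k')
                          \<and> xd = F + (\<Sum>q\<in>{1..d}. monom u (alpha q) *\<^sub>R G q)}"
      unfolding CG_all[OF ex p]
    proof (intro set_eqI iffI)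
      fix z assume "z \<in> {h p | F0 h. Fe FF GG xd u alpha d k F0 h}"
      then obtain F0 h where Fh: "Fe FF GG xd u alpha d k F0 h" and zh: "z = h p" by blast
      from bwd[OF Fh] obtain F G where FG: "(\<forall>k'. F $ k' \<in> FF k')" "(\<forall>p\<in>{1..d}. \<forall>k'. G p $ k' \<in> GG p k')"
        "xd = F + (\<Sum>p\<in>{1..d}. ?c p *\<^sub>R G p)" "\<forall>l. G l $ k = h l" by blast
      have "z = G p $ k" using zh FG(4) by simp
      with FG(1-3) show "z \<in> {G p $ k | F G. (\<forall>k'. F $ k' \<in> FF k') \<and> (\<forall>q\<in>{1..d}. \<forall>k'. G q $ k' \<in> GG q k')
                          \<and> xd = F + (\<Sum>q\<in>{1..d}. monom u (alpha q) *\<^sub>R G q)}" by blast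
    next
      fix z assume "z \<in> {G p $ k | F G. (\<forall>k'. F $ k' \<in> FF k') \<and> (\<forall>q\<in>{1..d}. \<forall>k'. G q $ k' \<in> GG q k')
                          \<and> xd = F + (\<Sum>q\<in>{1..d}. monom u (alpha q) *\<^sub>R G q)}"
      then obtain F G where FG2: "(\<forall>k'. F $ k' \<in> FF k')" "(\<forall>q\<in>{1..d}. \<forall>k'. G q $ k' \<in> GG q k')"
                          "xd = F + (\<Sum>q\<in>{1..d}. monom u (alpha q) *\<^sub>R G q)" "z = G p $ k" by blast
      note zz = FG2(4)
      have "Fe FF GG xd u alpha d k (F $ k) (\<lambda>l. G l $ k)" using fwd[OF FG2(1-3)] .
      then show "z \<in> {h p | F0 h. Fe FF GG xd u alpha d k F0 h}" using zz
        by (intro CollectI exI[of _ "F $ k"] exI[of _ "\<lambda>l. G l $ k"]) simp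
    qed
  qed
qed

end
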